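(* Let $\{r_k\}_{k\ge1}$ be a sequence in $\mathbb R^N$ and let $\{a_k\}_{k\ge1}\subset(0,1)$ satisfy $\sum_{k=1}^{+\infty}a_k=+\infty$. Assume that $F_{k+1}:=r_{k+1}+\sum_{j=1}^k a_jr_j$ has a finite limit in $\mathbb R^N$ as $k\to+\infty$. Then $\lim_{k\to+\infty}\|r_k\|=0$. *)

theory Defs
  imports "HOL-Analysis.Analysis"
begin

end

theory Submission
  imports Defs
begin

theorem lemmaA5:
  fixes r :: "nat \<Rightarrow> real ^ 'n" and a :: "nat \<Rightarrow> real"
  assumes a_bounds: "\<And>k. k \<ge> 1 \<Longrightarrow> 0 < a k \<and> a k < 1"
    and a_div: "filterlim (\<lambda>n. \<Sum>k=1..n. a k) at_top sequentially"
    and F_conv: "convergent (\<lambda>k. r (k + 1) + (\<Sum>j=1..k. a j *\<^sub>R r j))"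
  shows "(\<lambda>k. norm (r k)) \<longlonglongrightarrow> 0"
proof -
  define S where "S k = (\<Sum>j=1..k. a j *\<^sub>R r j)" for k
  define F where "F k = r (k + 1) + S k" for k
  define A where "A n = (\<Sum>k=1..n. a k)" for n
  obtain L where FL: "F \<longlonglongrightarrow> L" using F_conv unfolding convergent_def F_def S_def by blast
  have Sstep: "S (Suc k) = S k + a (Suc k) *\<^sub>R r (Suc k)" for k
    unfolding S_def by simp
  have Astep: "A (Suc k) = A k + a (Suc k)" for k unfolding A_def by simp
  have Dstep: "norm (S (Suc k) - L) \<le> (1 - a (Suc k)) * norm (S k - L) + a (Suc k) * norm (F k - L)" for k
  proof -
    have ab: "0 < a (Suc k)" "a (Suc k) < 1" using a_bounds[of "Suc k"] by auto
    have "S (Suc k) - L = (1 - a (Suc k)) *\<^sub>R (S k - L) + a (Suc k) *\<^sub>R (F k - L)"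
      unfolding Sstep F_def by (simp add: algebra_simps)
    also have "norm \<dots> \<le> norm ((1 - a (Suc k)) *\<^sub>R (S k - L)) + norm (a (Suc k) *\<^sub>R (F k - L))"
      by (rule norm_triangle_ineq)
    also have "\<dots> = (1 - a (Suc k)) * norm (S k - L) + a (Suc k) * norm (F k - L)"
      using ab by simp
    finally show ?thesis .
  qed
  have SL: "S \<longlonglongrightarrow> L"
    unfolding tendsto_iff dist_norm
  proof (intro allI impI)
    fix \<epsilon> :: real assume ep: "\<epsilon> > 0"
    define e where "e = \<epsilon> / 2"
    have e0: "e > 0" using ep by (simp add: e_def)
    obtain K where K: "\<And>k. k \<ge> K \<Longrightarrow> norm (F k - L) < e"
      using FL e0 unfolding LIMSEQ_iff by blast
    define v where "v k = max (norm (S k - L) - e) 0" for k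
    have vstep: "v (Suc k) \<le> exp (- a (Suc k)) * v k" if "k \<ge> K" for k
    proof -
      have ab: "0 < a (Suc k)" "a (Suc k) < 1" using a_bounds[of "Suc k"] by auto
      have v0: "v k \<ge> 0" "norm (S k - L) - e \<le> v k" unfolding v_def by auto
      have "norm (S (Suc k) - L) - e \<le> (1 - a (Suc k)) * (norm (S k - L) - e)"
      proof -
        have "a (Suc k) * norm (F k - L) \<le> a (Suc k) * e"
          using K[OF that] ab by (intro mult_left_mono) auto
        then show ?thesis using Dstep[of k] by (simp add: algebra_simps)
      qed
      also have "\<dots> \<le> (1 - a (Suc k)) * v k" using v0 ab by (intro mult_left_mono) auto
      also have "\<dots> \<le> exp (- a (Suc k)) * v k"
        using v0 exp_ge_add_one_self[of "- a (Suc k)"] by (intro mult_right_mono) auto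
      finally show ?thesis unfolding v_def[of "Suc k"] using v0 by auto
    qed
    have vbound: "v n \<le> v K * exp (- (A n - A K))" if "n \<ge> K" for n
      using that
    proof (induction n rule: dec_induct)
      case base then show ?case by simp
    next
      case (step m)
      have "v (Suc m) \<le> exp (- a (Suc m)) * v m" using vstep step(1) by simp
      also have "\<dots> \<le> exp (- a (Suc m)) * (v K * exp (- (A m - A K)))"
        using step(3) by (intro mult_left_mono) auto
      also have "\<dots> = v K * exp (- (A (Suc m) - A K))"
      proof -
        have "exp (- a (Suc m)) * exp (- (A m - A K)) = exp (- (A (Suc m) - A K))"
        proof -
          have eq: "- (A (Suc m) - A K) = - a (Suc m) + (- (A m - A K))" by (simp add: Astep)
          show ?thesis by (simp only: eq exp_add)
        qed
        then show ?thesis by (simp add: algebra_simps)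
      qed
      finally show ?case .
    qed
    have "filterlim (\<lambda>n. A n - A K) at_top sequentially"
      using a_div unfolding A_def[symmetric] by (rule filterlim_tendsto_add_at_top[OF tendsto_const, where c="- A K", simplified])
    hence "(\<lambda>n. exp (- (A n - A K))) \<longlonglongrightarrow> 0"
      by (intro filterlim_compose[OF exp_at_bot] filterlim_compose[OF filterlim_uminus_at_bot_at_top])
    hence "(\<lambda>n. v K * exp (- (A n - A K))) \<longlonglongrightarrow> v K * 0"
      by (intro tendsto_mult tendsto_const)
    hence "eventually (\<lambda>n. v K * exp (- (A n - A K)) < e) sequentially"
      using e0 by (intro order_tendstoD) auto
    moreover have "eventually (\<lambda>n. n \<ge> K) sequentially" by (rule eventually_ge_at_top)
    ultimately show "eventually (\<lambda>n. norm (S n - L) < \<epsilon>) sequentially"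
    proof eventually_elim
      case (elim n)
      have "v n < e" using vbound[OF elim(2)] elim(1) by linarith
      moreover have "norm (S n - L) - e \<le> v n" unfolding v_def by simp
      ultimately show ?case unfolding e_def by linarith
    qed
  qed
  have "(\<lambda>k. F k - S k) \<longlonglongrightarrow> L - L" by (intro tendsto_diff FL SL)
  hence "(\<lambda>k. r (Suc k)) \<longlonglongrightarrow> 0" unfolding F_def by simp
  hence "r \<longlonglongrightarrow> 0" by (rule LIMSEQ_imp_Suc)
  thus ?thesis by (rule tendsto_norm_zero)
qed

end
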